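(* Let $M$ be a metric space and $X$ a non-zero Banach space. Let $(x_n)_{n\in\mathbb N}\subseteq M$ and $r_n>0$ be such that the open balls $B(x_n,r_n)$, $n\in\mathbb N$, are pairwise disjoint. Then for every Lipschitz map $F:M\to X$ and every $\varepsilon>0$ there exists a Lipschitz map $G:M\to X$ such that the Lipschitz constant of $F-G$ is less than $\varepsilon$ and $G(x_n)\neq G(x_m)$ for all $n\neq m$. *)

theory Defs
  imports "HOL-Analysis.Analysis"
begin

definition lipschitz_map :: "('a::metric_space \<Rightarrow> 'b::metric_space) \<Rightarrow> bool" where
  "lipschitz_map f \<longleftrightarrow> (\<exists>C. lipschitz_on C UNIV f)"

end

theory Submission
  imports Defs
begin

lemma rec_choice:
  assumes ex: "\<And>n (f::nat \<Rightarrow> 'c). \<exists>y. P n f y"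
    and loc: "\<And>n f g y. (\<forall>m<n. f m = g m) \<Longrightarrow> P n f y \<Longrightarrow> P n g y"
  shows "\<exists>t. \<forall>n. P n t (t n)"
proof -
  define T where "T = rec_nat (\<lambda>_. undefined) (\<lambda>n f. f(n := SOME y. P n f y))"
  have T0: "T 0 = (\<lambda>_. undefined)" and TS: "\<And>n. T (Suc n) = (T n)(n := SOME y. P n (T n) y)"
    by (simp_all add: T_def)
  define t where "t n = T (Suc n) n" for n
  have stab: "\<forall>m<k. T k m = t m" for k
  proof (induction k)
    case 0 then show ?case by simp
  next
    case (Suc k) then show ?case by (auto simp: TS t_def less_Suc_eq)
  qed
  have "P n t (t n)" for n
  proof -
    have "P n (T n) (SOME y. P n (T n) y)" using ex by (rule someI_ex)
    hence "P n (T n) (t n)" by (simp add: t_def TS)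
    thus ?thesis using loc stab by blast
  qed
  thus ?thesis by blast
qed

lemma at_most_one_finite:
  assumes "\<And>a b. a \<in> S \<Longrightarrow> b \<in> S \<Longrightarrow> a = b"
  shows "finite S"
proof -
  have "S \<subseteq> {SOME s. s \<in> S}" using assms by (metis singletonI someI subsetI)
  thus ?thesis by (rule finite_subset) simp
qed

theorem lemma2p6:
  fixes x :: "nat \<Rightarrow> 'a::metric_space"
    and r :: "nat \<Rightarrow> real"
    and F :: "'a \<Rightarrow> 'b::banach"
    and \<epsilon> :: real
  assumes nonzero: "\<exists>v::'b. v \<noteq> 0"
    and r_pos: "\<And>n. r n > 0"
    and disj: "\<And>n m. n \<noteq> m \<Longrightarrow> ball (x n) (r n) \<inter> ball (x m) (r m) = {}"
    and F_lip: "lipschitz_map F"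
    and eps: "\<epsilon> > 0"
  shows "\<exists>G :: 'a \<Rightarrow> 'b. lipschitz_map G
           \<and> (\<exists>C < \<epsilon>. lipschitz_on C UNIV (\<lambda>p. F p - G p))
           \<and> (\<forall>n m. n \<noteq> m \<longrightarrow> G (x n) \<noteq> G (x m))"
proof -
  obtain v :: 'b where v: "v \<noteq> 0" using nonzero by blast
  define c where "c = \<epsilon> / (2 * norm v)"
  have c_pos: "c > 0" using eps v by (simp add: c_def)
  have cnv: "c * norm v = \<epsilon> / 2" using v by (simp add: c_def)
  define P where "P n f s \<longleftrightarrow> s \<in> {0..1::real} \<and>
      (\<forall>m<n. F (x n) + (c * s * r n) *\<^sub>R v \<noteq> F (x m) + (c * f m * r m) *\<^sub>R v)" for n f s
  have "\<exists>t. \<forall>n. P n t (t n)"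
  proof (rule rec_choice)
    fix n and f :: "nat \<Rightarrow> real"
    define B where "B = (\<Union>m<n. {s. F (x n) + (c * s * r n) *\<^sub>R v = F (x m) + (c * f m * r m) *\<^sub>R v})"
    have fin1: "finite {s. F (x n) + (c * s * r n) *\<^sub>R v = w}" for w
    proof (rule at_most_one_finite)
      fix a b assume "a \<in> {s. F (x n) + (c * s * r n) *\<^sub>R v = w}" "b \<in> {s. F (x n) + (c * s * r n) *\<^sub>R v = w}"
      thus "a = b" using c_pos r_pos[of n] v by auto
    qed
    have "finite B" unfolding B_def by (intro finite_UN_I) (simp_all add: fin1)
    hence "{0..1::real} - B \<noteq> {}"
    proof -
      assume fB: "finite B"
      show ?thesis
      proof
        assume "{0..1::real} - B = {}"
        hence "{0..1::real} \<subseteq> B" by blast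
        hence "finite {0..1::real}" using fB by (rule finite_subset)
        thus False using infinite_Icc[of "0::real" 1] by linarith
      qed
    qed
    then obtain s where "s \<in> {0..1}" "s \<notin> B" by blast
    hence "P n f s" unfolding P_def B_def by auto
    thus "\<exists>y. P n f y" by blast
  next
    fix n f g y assume "\<forall>m<n. f m = (g::nat\<Rightarrow>real) m" "P n f y"
    thus "P n g y" unfolding P_def by simp
  qed
  then obtain t where t: "\<And>n. P n t (t n)" by blast
  have t01: "0 \<le> t n" "t n \<le> 1" for n using t[of n] unfolding P_def by auto
  have uniq: "n = m" if "p \<in> ball (x n) (r n)" "p \<in> ball (x m) (r m)" for p n m
    using disj[of n m] that by blast
  define N where "N p = (SOME n. p \<in> ball (x n) (r n))" for p
  define \<phi> where "\<phi> p = (if \<exists>n. p \<in> ball (x n) (r n)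
      then t (N p) * (r (N p) - dist p (x (N p))) else 0)" for p
  have \<phi>_ball: "\<phi> p = t n * (r n - dist p (x n))" if "p \<in> ball (x n) (r n)" for p n
  proof -
    have "p \<in> ball (x (N p)) (r (N p))" unfolding N_def using that by (rule someI)
    hence "N p = n" using uniq that by blast
    thus ?thesis using that by (auto simp: \<phi>_def)
  qed
  have \<phi>_nn: "\<phi> p \<ge> 0" for p
  proof (cases "\<exists>n. p \<in> ball (x n) (r n)")
    case True
    then obtain n where n: "p \<in> ball (x n) (r n)" by blast
    thus ?thesis using \<phi>_ball[OF n] t01[of n] by (simp add: dist_commute)
  qed (simp add: \<phi>_def)
  have A: "\<phi> p \<le> dist p q" if "\<not> (\<exists>n. p \<in> ball (x n) (r n) \<and> q \<in> ball (x n) (r n))" for p q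
  proof (cases "\<exists>n. p \<in> ball (x n) (r n)")
    case True
    then obtain n where n: "p \<in> ball (x n) (r n)" by blast
    with that have q: "dist (x n) q \<ge> r n" by auto
    have "\<phi> p = t n * (r n - dist p (x n))" by (rule \<phi>_ball[OF n])
    also have "\<dots> \<le> r n - dist p (x n)"
      using t01[of n] n by (simp add: dist_commute mult_left_le_one_le)
    also have "\<dots> \<le> dist p q" using q dist_triangle[of "x n" q p]
      by (simp add: dist_commute)
    finally show ?thesis .
  qed (simp add: \<phi>_def)
  have \<phi>_lip: "\<bar>\<phi> p - \<phi> q\<bar> \<le> dist p q" for p q
  proof (cases "\<exists>n. p \<in> ball (x n) (r n) \<and> q \<in> ball (x n) (r n)")
    case True
    then obtain n where n: "p \<in> ball (x n) (r n)" "q \<in> ball (x n) (r n)" by blast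
    have "\<bar>\<phi> p - \<phi> q\<bar> = t n * \<bar>dist q (x n) - dist p (x n)\<bar>"
      using \<phi>_ball[OF n(1)] \<phi>_ball[OF n(2)] t01[of n]
      by (simp add: abs_mult right_diff_distrib[symmetric])
    also have "\<dots> \<le> \<bar>dist q (x n) - dist p (x n)\<bar>"
      using t01[of n] by (simp add: mult_left_le_one_le)
    also have "\<dots> \<le> dist p q" using dist_triangle[of q "x n" p] dist_triangle[of p "x n" q] by (simp add: dist_commute abs_le_iff)
    finally show ?thesis .
  next
    case False
    have "\<phi> p \<le> dist p q" using A[of p q] False by simp
    moreover have "\<phi> q \<le> dist q p" using A[of q p] False by auto
    ultimately show ?thesis using \<phi>_nn[of p] \<phi>_nn[of q] by (simp add: dist_commute abs_le_iff)
  qed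
  define h where "h p = (c * \<phi> p) *\<^sub>R v" for p
  have h_lip: "lipschitz_on (\<epsilon>/2) UNIV h"
  proof (rule lipschitz_onI)
    fix p q
    have "dist (h p) (h q) = c * \<bar>\<phi> p - \<phi> q\<bar> * norm v"
      using c_pos by (simp add: h_def dist_norm scaleR_diff_left[symmetric] abs_mult
          right_diff_distrib[symmetric])
    also have "\<dots> \<le> c * dist p q * norm v"
      using c_pos \<phi>_lip[of p q] by (simp add: mult_right_mono)
    also have "\<dots> = \<epsilon>/2 * dist p q" using cnv by (simp add: algebra_simps)
    finally show "dist (h p) (h q) \<le> \<epsilon>/2 * dist p q" .
  qed (use eps in simp)
  define G where "G p = F p + h p" for p
  obtain CF where CF: "lipschitz_on CF UNIV F" using F_lip unfolding lipschitz_map_def by blast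
  have "lipschitz_on (CF + \<epsilon>/2) UNIV G" unfolding G_def by (rule lipschitz_on_add[OF CF h_lip])
  hence G_lip: "lipschitz_map G" unfolding lipschitz_map_def by blast
  have "lipschitz_on (\<bar>-1\<bar> * (\<epsilon>/2)) UNIV (\<lambda>p. (-1) *\<^sub>R h p)"
    by (rule lipschitz_on_cmult[OF h_lip])
  hence "lipschitz_on (\<epsilon>/2) UNIV (\<lambda>p. F p - G p)" by (simp add: G_def)
  moreover have "\<epsilon>/2 < \<epsilon>" using eps by simp
  moreover have "G (x n) \<noteq> G (x m)" if "n \<noteq> m" for n m
  proof -
    have Gx: "G (x k) = F (x k) + (c * t k * r k) *\<^sub>R v" for k
    proof -
      have "x k \<in> ball (x k) (r k)" using r_pos[of k] by simp
      from \<phi>_ball[OF this] show ?thesis by (simp add: G_def h_def mult.assoc)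
    qed
    show ?thesis
    proof (cases "m < n")
      case True thus ?thesis using t[of n] unfolding P_def Gx by blast
    next
      case False
      hence "n < m" using that by simp
      thus ?thesis using t[of m] unfolding P_def Gx by auto
    qed
  qed
  ultimately show ?thesis using G_lip by blast
qed

end
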